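(* Assume (A1)–(A3). If $m_1<0$, then for every $\theta>0$ and $k\in\mathbb N$ there exist $C>0$ and $\delta>0$ such that for all $(i,j)\in\mathbb N\times\mathbb Z$ and $n\in\mathbb N$, \[\mathbb P_{(i,j)}(T_1(k)\ge n)\le C\exp(\theta i-\delta n),\] where $T_1(k)=\inf\{n>0: X_1(n)=k\}$.
   Context: Let $\mathbb N=\{0,1,2,\dots\}$ and fix an integer $k_0\ge1$. Let $\mu$, $\mu'_j$ ($0\le j<k_0$), $\mu''_i$ ($0\le i<k_0$), $\mu_{ij}$ ($0\le i,j<k_0$) be probability measures on $\mathbb Z^2$. The random walk $Z=(X(n),Y(n))$ on $\mathbb N^2$ has transition probabilities $p((i,j)\to(i',j'))$ equal to $\mu(i'-i,j'-j)$ if $i,j\ge k_0$; $\mu'_j(i'-i,j'-j)$ if $i\ge k_0$, $0\le j<k_0$; $\mu''_i(i'-i,j'-j)$ if $0\le i<k_0$, $j\ge k_0$; $\mu_{ij}(i'-i,j'-j)$ if $0\le i,j<k_0$. Assumptions: (A1) $\mu(a,b)=0$ if $a<-k_0$ or $b<-k_0$; $\mu'_j(a,b)=0$ if $a<-k_0$ or $b<-j$; $\mu''_i(a,b)=0$ if $b<-k_0$ or $a<-i$; $\mu_{ij}(a,b)=0$ if $a<-i$ or $b<-j$. (A2) There are $\delta,\gamma,C>0$ with $\sup_{(i,j)\in\mathbb N^2}\mathbb E_{(i,j)}[\exp(\delta(X(1)-i)+\gamma(Y(1)-j))]\le C$. (A3) $Z_0,Z_1,Z_2,Z$ are irreducible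 on their state spaces. $Z_0$: random walk on $\mathbb Z^2$ with increment law $\mu$; $m_1=\sum a\mu(a,b)$. $Z_1=(X_1,Y_1)$: Markov chain on $\mathbb N\times\mathbb Z$ with transitions $\mu(i'-i,j'-j)$ from $(i,j)$ if $i\ge k_0$ and $\mu''_i(i'-i,j'-j)$ if $0\le i<k_0$; $\mathbb P_{(i,j)}$ is its law from $(i,j)$. $Z_2$: Markov chain on $\mathbb Z\times\mathbb N$ with transitions $\mu$ if $j\ge k_0$ and $\mu'_j$ if $0\le j<k_0$. *)

theory Defs
  imports "HOL-Probability.Probability"
begin

type_synonym state = "int \<times> int"

definition step :: "(state \<Rightarrow> state pmf) \<Rightarrow> state \<Rightarrow> state pmf" where
  "step kern s = map_pmf (\<lambda>d. (fst s + fst d, snd s + snd d)) (kern s)"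

fun traj :: "(state \<Rightarrow> state pmf) \<Rightarrow> state \<Rightarrow> nat \<Rightarrow> state list pmf" where
  "traj kern s 0 = return_pmf [s]"
| "traj kern s (Suc n) = bind_pmf (step kern s) (\<lambda>s'. map_pmf (\<lambda>xs. s # xs) (traj kern s' n))"

definition irreducible_on :: "state set \<Rightarrow> (state \<Rightarrow> state pmf) \<Rightarrow> bool" where
  "irreducible_on S kern \<longleftrightarrow>
     (\<forall>x\<in>S. \<forall>y\<in>S. (x, y) \<in> {(u, v). u \<in> S \<and> v \<in> S \<and> v \<in> set_pmf (step kern u)}\<^sup>*)"

definition NN :: "state set" where "NN = {s. fst s \<ge> 0 \<and> snd s \<ge> 0}"
definition NZ :: "state set" where "NZ = {s. fst s \<ge> 0}"
definition ZN :: "state set" where "ZN = {s. snd s \<ge> 0}"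

definition kernZ :: "nat \<Rightarrow> state pmf \<Rightarrow> (nat \<Rightarrow> state pmf) \<Rightarrow> (nat \<Rightarrow> state pmf)
    \<Rightarrow> (nat \<Rightarrow> nat \<Rightarrow> state pmf) \<Rightarrow> state \<Rightarrow> state pmf" where
  "kernZ k0 mu mu' mu'' mu2 s =
     (if fst s \<ge> int k0 \<and> snd s \<ge> int k0 then mu
      else if fst s \<ge> int k0 then mu' (nat (snd s))
      else if snd s \<ge> int k0 then mu'' (nat (fst s))
      else mu2 (nat (fst s)) (nat (snd s)))"

definition kernZ1 :: "nat \<Rightarrow> state pmf \<Rightarrow> (nat \<Rightarrow> state pmf) \<Rightarrow> state \<Rightarrow> state pmf" where
  "kernZ1 k0 mu mu'' s = (if fst s \<ge> int k0 then mu else mu'' (nat (fst s)))"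

definition kernZ2 :: "nat \<Rightarrow> state pmf \<Rightarrow> (nat \<Rightarrow> state pmf) \<Rightarrow> state \<Rightarrow> state pmf" where
  "kernZ2 k0 mu mu' s = (if snd s \<ge> int k0 then mu else mu' (nat (snd s)))"

text \<open>P_{(i,j)}(T_1(k) \<ge> n) for Z_1, where T_1(k) = inf{m > 0 : X_1(m) = k}
  (inf of the empty set = \<infinity>): the event is that X_1(m) \<noteq> k for all 0 < m < n.\<close>
definition T1_ge_prob :: "nat \<Rightarrow> state pmf \<Rightarrow> (nat \<Rightarrow> state pmf) \<Rightarrow> nat \<Rightarrow> state \<Rightarrow> nat \<Rightarrow> real" where
  "T1_ge_prob k0 mu mu'' k s n =
     measure_pmf.prob (traj (kernZ1 k0 mu mu'') s n)
       {xs. \<forall>m. 0 < m \<and> m < n \<longrightarrow> fst (xs ! m) \<noteq> int k}"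

end

theory Submission
  imports Defs
begin

definition Qop :: "(state \<Rightarrow> state pmf) \<Rightarrow> int \<Rightarrow> (state \<Rightarrow> ennreal) \<Rightarrow> state \<Rightarrow> ennreal" where
  "Qop kern k f s = (if fst s = k then 0 else \<integral>\<^sup>+ s'. f s' \<partial>measure_pmf (step kern s))"

definition wfun :: "(state \<Rightarrow> state pmf) \<Rightarrow> int \<Rightarrow> nat \<Rightarrow> state \<Rightarrow> ennreal" where
  "wfun kern k n s = emeasure (measure_pmf (traj kern s n)) {xs. \<forall>m<n. fst (xs ! m) \<noteq> k}"

lemma wfun_0: "wfun kern k 0 s = 1"
  by (simp add: wfun_def measure_pmf.emeasure_space_1[simplified])

lemma set_Suc_eq: "{xs. \<forall>m<Suc n. fst ((s # xs) ! m) \<noteq> k}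
   = (if fst s = k then {} else {xs. \<forall>m<n. fst (xs ! m) \<noteq> k})"
  by (auto simp: less_Suc_eq_0_disj)

lemma wfun_Suc: "wfun kern k (Suc n) s = Qop kern k (wfun kern k n) s"
  by (simp add: wfun_def Qop_def set_Suc_eq)

lemma wfun_iter: "wfun kern k n = (Qop kern k ^^ n) (\<lambda>_. 1)"
proof (induction n)
  case 0 then show ?case by (auto simp: wfun_0)
next
  case (Suc n) then show ?case by (auto simp: wfun_Suc[abs_def])
qed

lemma T1_eq: "emeasure (measure_pmf (traj kern s (Suc n))) {xs. \<forall>m. 0 < m \<and> m < Suc n \<longrightarrow> fst (xs ! m) \<noteq> k}
   = (\<integral>\<^sup>+ s'. wfun kern k n s' \<partial>measure_pmf (step kern s))"
proof -
  have "(\<lambda>xs. s # xs) -` {xs. \<forall>m. 0 < m \<and> m < Suc n \<longrightarrow> fst (xs ! m) \<noteq> k} = {xs. \<forall>m<n. fst (xs ! m) \<noteq> k}"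
    by (auto simp: less_Suc_eq_0_disj)
  then show ?thesis by (simp add: wfun_def)
qed

lemma wfun_le1: "wfun kern k n s \<le> 1"
  unfolding wfun_def by (rule measure_pmf.emeasure_le_1)

lemma Qop_cmult: "Qop kern k (\<lambda>s. c * f s) s = c * Qop kern k f s"
  by (simp add: Qop_def nn_integral_cmult)

lemma Qop_add: "Qop kern k (\<lambda>s. f s + g s) s = Qop kern k f s + Qop kern k g s"
  by (simp add: Qop_def nn_integral_add)

lemma Qop_mono: "(\<And>s. f s \<le> g s) \<Longrightarrow> Qop kern k f s \<le> Qop kern k g s"
  by (simp add: Qop_def nn_integral_mono)

lemma Qop_one: "Qop kern k (\<lambda>_. 1) s \<le> 1"
  by (simp add: Qop_def measure_pmf.emeasure_space_1[simplified])

lemma iter_cmult_fun: "(Qop kern k ^^ m) (\<lambda>s. c * f s) = (\<lambda>s. c * (Qop kern k ^^ m) f s)"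
proof (induction m)
  case (Suc m) then show ?case by (simp add: Qop_cmult)
qed simp

lemma iter_cmult: "(Qop kern k ^^ m) (\<lambda>s. c * f s) s = c * (Qop kern k ^^ m) f s"
  by (simp add: iter_cmult_fun)

lemma iter_add_fun: "(Qop kern k ^^ m) (\<lambda>s. f s + g s) = (\<lambda>s. (Qop kern k ^^ m) f s + (Qop kern k ^^ m) g s)"
proof (induction m)
  case (Suc m) then show ?case by (simp add: Qop_add)
qed simp

lemma iter_add: "(Qop kern k ^^ m) (\<lambda>s. f s + g s) s = (Qop kern k ^^ m) f s + (Qop kern k ^^ m) g s"
  by (simp add: iter_add_fun)

lemma iter_mono: "(\<And>s. f s \<le> g s) \<Longrightarrow> (Qop kern k ^^ m) f s \<le> (Qop kern k ^^ m) g s"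
proof (induction m arbitrary: s)
  case (Suc m) then show ?case by (simp add: Qop_mono)
qed simp

lemma iter_one: "(Qop kern k ^^ m) (\<lambda>_. 1) s \<le> 1"
  using wfun_le1[of kern k m s] by (simp add: wfun_iter)


lemma ennreal_aux: "(a::ennreal) + ennreal r \<le> 1 \<Longrightarrow> 0 \<le> r \<Longrightarrow> r \<le> 1 \<Longrightarrow> a \<le> ennreal (1 - r)"
  by (metis ennreal_1 ennreal_le_minus_iff ennreal_minus)

lemma wfun_inv:
  assumes "\<And>x j j'. kern (x, j) = kern (x, j')"
  shows "wfun kern k n (x, j) = wfun kern k n (x, j')"
proof (induction n arbitrary: x j j')
  case 0 then show ?case by (simp add: wfun_0)
next
  case (Suc n)
  have "(\<integral>\<^sup>+ d. wfun kern k n (x + fst d, j + snd d) \<partial>measure_pmf (kern (x, j)))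
      = (\<integral>\<^sup>+ d. wfun kern k n (x + fst d, j' + snd d) \<partial>measure_pmf (kern (x, j')))"
    using Suc.IH assms[of x j j'] by (metis (no_types, lifting) nn_integral_cong)
  then show ?case by (simp add: wfun_Suc Qop_def step_def)
qed

lemma hit_lemma:
  assumes "(s, s2) \<in> {(u, v). u \<in> S \<and> v \<in> S \<and> v \<in> set_pmf (step kern u)}\<^sup>*" "fst s2 = k"
  shows "\<exists>p>0. p \<le> 1 \<and> (\<exists>l. \<forall>n>l. wfun kern k n s \<le> ennreal (1 - p))"
  using assms
proof (induction rule: converse_rtrancl_induct)
  case base
  have "\<forall>n>0. wfun kern k n s2 \<le> ennreal (1 - 1)"
  proof (intro allI impI)
    fix n :: nat assume "n > 0"
    then obtain n' where "n = Suc n'" using gr0_conv_Suc by blast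
    then show "wfun kern k n s2 \<le> ennreal (1 - 1)" using base by (simp add: wfun_Suc Qop_def)
  qed
  then show ?case by (intro exI[of _ 1]) auto
next
  case (step s s1)
  from step.IH step.prems obtain p l where p: "p > 0" "p \<le> 1" and l: "\<forall>n>l. wfun kern k n s1 \<le> ennreal (1 - p)"
    by blast
  define q where "q = pmf (step kern s) s1"
  have q: "q > 0" using step.hyps(1) by (simp add: q_def pmf_positive)
  have q1: "q \<le> 1" by (simp add: q_def pmf_le_1)
  have "\<forall>n>Suc l. wfun kern k n s \<le> ennreal (1 - q * p)"
  proof (intro allI impI)
    fix n :: nat assume "n > Suc l"
    then obtain n' where n': "n = Suc n'" "n' > l" by (cases n) auto
    let ?f = "wfun kern k n'"
    have pt: "?f x + ennreal p * indicator {s1} x \<le> 1" for x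
    proof (cases "x = s1")
      case True
      have "?f s1 + ennreal p \<le> ennreal (1 - p) + ennreal p" using l n' by (intro add_right_mono) auto
      also have "\<dots> = 1" using p by (simp add: ennreal_plus[symmetric] del: ennreal_plus)
      finally show ?thesis using True by simp
    next
      case False then show ?thesis by (simp add: wfun_le1)
    qed
    have "(\<integral>\<^sup>+ x. ?f x \<partial>measure_pmf (step kern s)) + ennreal (q * p)
        = (\<integral>\<^sup>+ x. ?f x + ennreal p * indicator {s1} x \<partial>measure_pmf (step kern s))"
      using q p by (simp add: nn_integral_add nn_integral_cmult_indicator emeasure_pmf_single q_def
          ennreal_mult mult.commute)
    also have "\<dots> \<le> (\<integral>\<^sup>+ x. 1 \<partial>measure_pmf (step kern s))" by (intro nn_integral_mono pt)
    also have "\<dots> = 1" by (simp add: measure_pmf.emeasure_space_1[simplified])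
    finally have "(\<integral>\<^sup>+ x. ?f x \<partial>measure_pmf (step kern s)) \<le> ennreal (1 - q * p)"
      using q p q1 by (intro ennreal_aux) (auto simp: mult_le_one)
    moreover have "wfun kern k n s \<le> (\<integral>\<^sup>+ x. ?f x \<partial>measure_pmf (step kern s))"
      using n' by (simp add: wfun_Suc Qop_def)
    ultimately show "wfun kern k n s \<le> ennreal (1 - q * p)" by (rule order_trans[rotated])
  qed
  then show ?case using q p q1 by (intro exI[of _ "q * p"]) (auto simp: mult_le_one)
qed


lemma exp_quad_upper: "exp (y::real) \<le> 1 + y + y^2 * exp \<bar>y\<bar>"
proof -
  obtain \<xi> where xi: "\<bar>\<xi>\<bar> \<le> \<bar>y\<bar>" "exp y = (\<Sum>m<2. y ^ m / fact m) + (exp \<xi> / fact 2) * y ^ 2"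
    using Maclaurin_exp_le[of y 2] by blast
  have e: "exp \<xi> \<le> exp \<bar>y\<bar>" using xi(1) by simp
  have f2: "(fact 2 :: real) = 2" by (simp add: fact_numeral)
  have "(exp \<xi> / 2) * y ^ 2 \<le> exp \<bar>y\<bar> * y^2"
  proof -
    have "exp \<xi> / 2 \<le> exp \<bar>y\<bar>" using e exp_gt_zero[of \<xi>] by linarith
    then show ?thesis by (intro mult_right_mono) auto
  qed
  then have "(exp \<xi> / fact 2) * y ^ 2 \<le> y^2 * exp \<bar>y\<bar>" unfolding f2 by (simp add: mult.commute)
  moreover have "(\<Sum>m<2. y ^ m / fact m) = 1 + y" by (simp add: numeral_2_eq_2)
  ultimately show ?thesis using xi(2) by linarith
qed

lemma ptwise_bound:
  fixes a t t0 :: real and k0 :: nat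
  assumes "a \<ge> - real k0" "0 < t" "t \<le> t0"
  shows "exp (t * a) \<le> 1 + t * a + t^2 * (1 + (real k0)^2 * exp (t0 * real k0) + 2 / t0^2 * exp (2 * t0 * a))"
proof -
  have t0: "t0 > 0" using assms by simp
  have "exp (t * a) \<le> 1 + t * a + (t * a)^2 * exp \<bar>t * a\<bar>" by (rule exp_quad_upper)
  moreover have "a^2 * exp \<bar>t * a\<bar> \<le> 1 + (real k0)^2 * exp (t0 * real k0) + 2 / t0^2 * exp (2 * t0 * a)"
  proof (cases "a \<ge> 0")
    case True
    have "\<bar>t * a\<bar> = t * a" using True assms by simp
    also have "t * a \<le> t0 * a" using True assms by (intro mult_right_mono) auto
    finally have e1: "exp \<bar>t * a\<bar> \<le> exp (t0 * a)" by simp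
    have "1 + (t0*a) + (t0*a)^2/2 \<le> exp (t0 * a)" using True t0 by (intro exp_lower_Taylor_quadratic) simp
    moreover have "0 \<le> t0 * a" using True t0 by simp
    ultimately have "(t0*a)^2 \<le> 2 * exp (t0 * a)" by linarith
    then have "t0^2 * a^2 \<le> 2 * exp (t0 * a)" by (simp add: power_mult_distrib)
    then have "(t0^2 * a^2) / t0^2 \<le> (2 * exp (t0 * a)) / t0^2" using t0 by (intro divide_right_mono) auto
    moreover have "(t0^2 * a^2) / t0^2 = a^2" using t0 by simp
    ultimately have a2: "a^2 \<le> 2 / t0^2 * exp (t0 * a)" by simp
    have "a^2 * exp \<bar>t * a\<bar> \<le> (2 / t0^2 * exp (t0 * a)) * exp (t0 * a)"
      using a2 e1 by (intro mult_mono) auto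
    also have "\<dots> = 2 / t0^2 * exp (2 * t0 * a)"
    proof -
      have "exp (t0 * a) * exp (t0 * a) = exp (2 * t0 * a)" by (simp add: exp_add[symmetric])
      then show ?thesis by simp
    qed
    moreover have "0 \<le> (real k0)^2 * exp (t0 * real k0)" by simp
    ultimately show ?thesis by linarith
  next
    case False
    have ak: "\<bar>a\<bar> \<le> real k0" using False assms by simp
    then have a2: "a^2 \<le> (real k0)^2" by (metis abs_le_square_iff abs_of_nat)
    have "\<bar>t * a\<bar> = t * \<bar>a\<bar>" using assms by (simp add: abs_mult)
    also have "\<dots> \<le> t0 * real k0" using ak assms by (intro mult_mono) auto
    finally have e1: "exp \<bar>t * a\<bar> \<le> exp (t0 * real k0)" by simp
    have "a^2 * exp \<bar>t * a\<bar> \<le> (real k0)^2 * exp (t0 * real k0)" using a2 e1 by (intro mult_mono) auto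
    moreover have "0 \<le> 2 / t0^2 * exp (2 * t0 * a)" by simp
    ultimately show ?thesis by linarith
  qed
  then have "t^2 * (a^2 * exp \<bar>t * a\<bar>) \<le> t^2 * (1 + (real k0)^2 * exp (t0 * real k0) + 2 / t0^2 * exp (2 * t0 * a))"
    by (intro mult_left_mono) auto
  then have "(t * a)^2 * exp \<bar>t * a\<bar> \<le> t^2 * (1 + (real k0)^2 * exp (t0 * real k0) + 2 / t0^2 * exp (2 * t0 * a))"
    by (simp add: power_mult_distrib mult.assoc)
  ultimately show ?thesis by linarith
qed

lemma drift_exists:
  fixes mu :: "state pmf" and k0 :: nat
  assumes A1: "\<forall>d\<in>set_pmf mu. fst d \<ge> - int k0"
    and d0: "\<delta>0 > 0" and mom: "(\<integral>\<^sup>+ d. ennreal (exp (\<delta>0 * real_of_int (fst d))) \<partial>measure_pmf mu) \<le> ennreal C1"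
    and m1: "measure_pmf.expectation mu (\<lambda>d. real_of_int (fst d)) < 0"
    and th: "\<theta> > 0"
  shows "\<exists>t \<psi>. 0 < t \<and> t \<le> \<theta> \<and> t \<le> \<delta>0 \<and> \<psi> < 1 \<and>
     (\<integral>\<^sup>+ d. ennreal (exp (t * real_of_int (fst d))) \<partial>measure_pmf mu) \<le> ennreal \<psi>"
proof -
  define X where "X = (\<lambda>d::state. real_of_int (fst d))"
  define t0 where "t0 = \<delta>0 / 2"
  have t0: "t0 > 0" using d0 by (simp add: t0_def)
  have Xlow: "X d \<ge> - real k0" if "d \<in> set_pmf mu" for d
    using A1 that unfolding X_def by force
  have intE: "integrable (measure_pmf mu) (\<lambda>d. exp (\<delta>0 * X d))"
  proof (rule integrableI_nonneg)
    show "(\<integral>\<^sup>+ d. ennreal (exp (\<delta>0 * X d)) \<partial>measure_pmf mu) < \<infinity>"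
      using mom unfolding X_def by (simp add: le_less_trans)
  qed auto
  define H where "H = (\<lambda>d. 1 + (real k0)^2 * exp (t0 * real k0) + 2 / t0^2 * exp (\<delta>0 * X d))"
  have intH: "integrable (measure_pmf mu) H"
    unfolding H_def using intE by (intro Bochner_Integration.integrable_add integrable_mult_right) auto
  have intX: "integrable (measure_pmf mu) X"
  proof (rule Bochner_Integration.integrable_bound)
    show "integrable (measure_pmf mu) (\<lambda>d. real k0 + exp (\<delta>0 * X d) / \<delta>0)"
      using intE by (intro Bochner_Integration.integrable_add integrable_divide) auto
    show "AE d in measure_pmf mu. norm (X d) \<le> norm (real k0 + exp (\<delta>0 * X d) / \<delta>0)"
      unfolding AE_measure_pmf_iff
    proof (intro ballI)
      fix d assume d: "d \<in> set_pmf mu"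
      have p: "0 \<le> exp (\<delta>0 * X d) / \<delta>0" using d0 by simp
      show "norm (X d) \<le> norm (real k0 + exp (\<delta>0 * X d) / \<delta>0)"
      proof (cases "X d \<ge> 0")
        case True
        have "\<delta>0 * X d \<le> exp (\<delta>0 * X d)" using exp_ge_add_one_self[of "\<delta>0 * X d"] by linarith
        then have "X d \<le> exp (\<delta>0 * X d) / \<delta>0" using d0 by (simp add: pos_le_divide_eq mult.commute)
        then show ?thesis using True p by simp
      next
        case False
        then show ?thesis using Xlow[OF d] p by simp
      qed
    qed
  qed auto
  define m where "m = measure_pmf.expectation mu X"
  have m: "m < 0" using m1 unfolding m_def X_def .
  define Hm where "Hm = measure_pmf.expectation mu H"
  have Hm: "Hm \<ge> 1"
  proof -
    have "measure_pmf.expectation mu (\<lambda>_. 1::real) \<le> Hm"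
      unfolding Hm_def using intH by (intro Bochner_Integration.integral_mono) (auto simp: H_def)
    then show ?thesis by simp
  qed
  define t where "t = min \<theta> (min t0 (- m / (2 * Hm)))"
  have tpos: "t > 0" using th t0 m Hm by (simp add: t_def divide_neg_pos)
  have tt0: "t \<le> t0" by (simp add: t_def)
  have tHm: "t * Hm \<le> - m / 2"
  proof -
    have "t \<le> - m / (2 * Hm)" by (simp add: t_def)
    then have "t * Hm \<le> (- m / (2 * Hm)) * Hm" using Hm by (intro mult_right_mono) auto
    also have "\<dots> = - m / 2" using Hm by simp
    finally show ?thesis .
  qed
  have intEt: "integrable (measure_pmf mu) (\<lambda>d. exp (t * X d))"
  proof (rule Bochner_Integration.integrable_bound)
    show "integrable (measure_pmf mu) (\<lambda>d. 1 + exp (\<delta>0 * X d))"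
      using intE by (intro Bochner_Integration.integrable_add) auto
    show "AE d in measure_pmf mu. norm (exp (t * X d)) \<le> norm (1 + exp (\<delta>0 * X d))"
    proof (intro AE_I2)
      fix d
      show "norm (exp (t * X d)) \<le> norm (1 + exp (\<delta>0 * X d))"
      proof (cases "X d \<ge> 0")
        case True
        have "t * X d \<le> \<delta>0 * X d" using True tt0 t0 unfolding t0_def by (intro mult_right_mono) auto
        then have "exp (t * X d) \<le> exp (\<delta>0 * X d)" by simp
        then have "exp (t * X d) \<le> 1 + exp (\<delta>0 * X d)" by linarith
        moreover have "0 \<le> 1 + exp (\<delta>0 * X d)" using exp_gt_zero[of "\<delta>0 * X d"] by linarith
        ultimately show ?thesis by simp
      next
        case False
        then have "t * X d \<le> 0" using tpos by (simp add: mult_nonneg_nonpos)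
        then have "exp (t * X d) \<le> 1" by simp
        then have "exp (t * X d) \<le> 1 + exp (\<delta>0 * X d)" using exp_gt_zero[of "\<delta>0 * X d"] by linarith
        moreover have "0 \<le> 1 + exp (\<delta>0 * X d)" using exp_gt_zero[of "\<delta>0 * X d"] by linarith
        ultimately show ?thesis by simp
      qed
    qed
  qed auto
  have "measure_pmf.expectation mu (\<lambda>d. exp (t * X d))
      \<le> measure_pmf.expectation mu (\<lambda>d. 1 + t * X d + t^2 * H d)"
  proof (rule integral_mono_AE)
    show "integrable (measure_pmf mu) (\<lambda>d. 1 + t * X d + t^2 * H d)"
      using intX intH by (intro Bochner_Integration.integrable_add integrable_mult_right) auto
    show "AE d in measure_pmf mu. exp (t * X d) \<le> 1 + t * X d + t^2 * H d"
      unfolding AE_measure_pmf_iff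
    proof (intro ballI)
      fix d assume d: "d \<in> set_pmf mu"
      have "exp (t * X d) \<le> 1 + t * X d + t^2 * (1 + (real k0)^2 * exp (t0 * real k0) + 2 / t0^2 * exp (2 * t0 * X d))"
        using Xlow[OF d] tpos tt0 by (intro ptwise_bound) auto
      moreover have "2 * t0 = \<delta>0" by (simp add: t0_def)
      ultimately show "exp (t * X d) \<le> 1 + t * X d + t^2 * H d" by (simp add: H_def)
    qed
  qed (rule intEt)
  also have "\<dots> = 1 + t * m + t^2 * Hm"
    using intX intH by (simp add: m_def Hm_def integral_add integral_mult_right)
  also have "\<dots> \<le> 1 + t * m / 2"
  proof -
    have "t^2 * Hm = t * (t * Hm)" by (simp add: power2_eq_square)
    also have "\<dots> \<le> t * (- m / 2)" using tHm tpos by (intro mult_left_mono) auto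
    finally have "t^2 * Hm \<le> t * (- m / 2)" .
    then show ?thesis by (simp add: algebra_simps)
  qed
  finally have bound: "measure_pmf.expectation mu (\<lambda>d. exp (t * X d)) \<le> 1 + t * m / 2" .
  have "(\<integral>\<^sup>+ d. ennreal (exp (t * X d)) \<partial>measure_pmf mu) = ennreal (measure_pmf.expectation mu (\<lambda>d. exp (t * X d)))"
    using intEt by (intro nn_integral_eq_integral) auto
  also have "\<dots> \<le> ennreal (1 + t * m / 2)" using bound by (rule ennreal_leI)
  finally have fin: "(\<integral>\<^sup>+ d. ennreal (exp (t * X d)) \<partial>measure_pmf mu) \<le> ennreal (1 + t * m / 2)" .
  have "t \<le> \<delta>0" using tt0 d0 unfolding t0_def by simp
  moreover have "1 + t * m / 2 < 1" using tpos m by (simp add: mult_pos_neg)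
  moreover have "t \<le> \<theta>" by (simp add: t_def)
  ultimately show ?thesis using fin tpos unfolding X_def by blast
qed


lemma Qop_mono_D:
  assumes supp: "\<And>s s'. fst s \<ge> 0 \<Longrightarrow> s' \<in> set_pmf (step kern s) \<Longrightarrow> fst s' \<ge> 0"
    and le: "\<And>s. fst s \<ge> 0 \<Longrightarrow> f s \<le> g s" and s: "fst s \<ge> 0"
  shows "Qop kern k f s \<le> Qop kern k g s"
proof -
  have "(\<integral>\<^sup>+ s'. f s' \<partial>measure_pmf (step kern s)) \<le> (\<integral>\<^sup>+ s'. g s' \<partial>measure_pmf (step kern s))"
    by (intro nn_integral_mono_AE) (auto simp: AE_measure_pmf_iff intro!: le supp[OF s])
  then show ?thesis by (simp add: Qop_def)
qed

lemma iter_mono_D: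
  assumes supp: "\<And>s s'. fst s \<ge> 0 \<Longrightarrow> s' \<in> set_pmf (step kern s) \<Longrightarrow> fst s' \<ge> 0"
    and le: "\<And>s. fst s \<ge> 0 \<Longrightarrow> f s \<le> g s" and s: "fst s \<ge> 0"
  shows "(Qop kern k ^^ m) f s \<le> (Qop kern k ^^ m) g s"
  using s
proof (induction m arbitrary: s)
  case 0 then show ?case using le by simp
next
  case (Suc m)
  have "Qop kern k ((Qop kern k ^^ m) f) s \<le> Qop kern k ((Qop kern k ^^ m) g) s"
    by (rule Qop_mono_D[OF supp]) (auto intro: Suc.IH Suc.prems)
  then show ?case by simp
qed

lemma Qop_le_P: "Qop kern k f s \<le> (\<integral>\<^sup>+ s'. f s' \<partial>measure_pmf (step kern s))"
  by (simp add: Qop_def)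

lemma ennreal_lin: "0 \<le> a \<Longrightarrow> 0 \<le> x \<Longrightarrow> 0 \<le> c \<Longrightarrow> ennreal a * ennreal x + ennreal c = ennreal (a * x + c)"
  by (simp add: ennreal_mult ennreal_plus)

lemma iterV:
  fixes \<psi> b :: real
  assumes psi: "0 \<le> \<psi>" "\<psi> < 1" and b: "0 \<le> b"
    and QV: "\<And>s. Qop kern k V s \<le> ennreal \<psi> * V s + ennreal b"
  shows "(Qop kern k ^^ m) V s \<le> ennreal (\<psi> ^ m) * V s + ennreal (b / (1 - \<psi>))"
proof (induction m arbitrary: s)
  case 0
  then show ?case by simp
next
  case (Suc m)
  let ?Q = "Qop kern k"
  have "(?Q ^^ Suc m) V s = (?Q ^^ m) (?Q V) s" by (simp add: funpow_Suc_right del: funpow.simps)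
  also have "\<dots> \<le> (?Q ^^ m) (\<lambda>s. ennreal \<psi> * V s + ennreal b * 1) s"
    by (intro iter_mono) (simp add: QV)
  also have "\<dots> = ennreal \<psi> * (?Q ^^ m) V s + ennreal b * (?Q ^^ m) (\<lambda>_. 1) s"
    by (simp only: iter_add iter_cmult)
  also have "\<dots> \<le> ennreal \<psi> * (ennreal (\<psi> ^ m) * V s + ennreal (b / (1 - \<psi>))) + ennreal b * 1"
    by (intro add_mono mult_left_mono Suc iter_one) auto
  also have "\<dots> = ennreal (\<psi> ^ Suc m) * V s + ennreal (\<psi> * (b / (1 - \<psi>)) + b)"
  proof -
    have e1: "ennreal (\<psi> ^ Suc m) = ennreal \<psi> * ennreal (\<psi> ^ m)" using psi by (simp add: ennreal_mult)
    have e2: "ennreal (\<psi> * (b / (1 - \<psi>)) + b) = ennreal \<psi> * ennreal (b / (1 - \<psi>)) + ennreal b"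
    proof -
      have nn: "0 \<le> b / (1 - \<psi>)" using psi b by simp
      show ?thesis by (simp only: ennreal_plus[OF mult_nonneg_nonneg[OF psi(1) nn] b] ennreal_mult[OF psi(1) nn])
    qed
    show ?thesis unfolding e1 e2 by (simp add: distrib_left mult.assoc add.assoc)
  qed
  also have "\<psi> * (b / (1 - \<psi>)) + b = b / (1 - \<psi>)"
    using psi by (simp add: field_simps)
  finally show ?case .
qed

lemma ennreal_comb:
  fixes a v b' c xb :: real and X :: ennreal
  assumes "X \<le> ennreal xb" "0 \<le> a" "0 \<le> v" "0 \<le> b'" "0 \<le> c" "0 \<le> xb"
  shows "ennreal a * ennreal v + ennreal b' + ennreal c * X \<le> ennreal (a * v + b' + c * xb)"
proof -
  have "ennreal c * X \<le> ennreal c * ennreal xb" using assms(1) by (rule mult_left_mono) simp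
  then have "ennreal a * ennreal v + ennreal b' + ennreal c * X \<le> ennreal a * ennreal v + ennreal b' + ennreal c * ennreal xb"
    by (rule add_left_mono)
  also have "\<dots> = ennreal (a * v + b' + c * xb)"
  proof -
    have 1: "ennreal (a * v) = ennreal a * ennreal v" using assms by (intro ennreal_mult) auto
    have 2: "ennreal (c * xb) = ennreal c * ennreal xb" using assms by (intro ennreal_mult) auto
    have n1: "0 \<le> a * v" "0 \<le> c * xb" using assms by auto
    have 3: "ennreal (a * v + b' + c * xb) = ennreal (a * v) + ennreal b' + ennreal (c * xb)"
      unfolding ennreal_plus[OF add_nonneg_nonneg[OF n1(1) assms(4)] n1(2)] ennreal_plus[OF n1(1) assms(4)] ..
    show ?thesis unfolding 3 1 2 ..
  qed
  finally show ?thesis .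
qed

lemma lam_pow_bound:
  fixes lam :: real and M n :: nat
  assumes "0 < lam" "lam < 1" "M \<ge> 1"
  shows "lam ^ (n div M) \<le> exp (- (- ln lam / real M) * real (Suc n)) / lam^2"
proof -
  define q where "q = n div M"
  have Mpos: "real M > 0" using assms by simp
  have e: "n = q * M + n mod M" by (simp add: q_def)
  have "n mod M < M" using assms by simp
  then have "n < q * M + M" using e by linarith
  then have "real n < real (q * M + M)" by (simp only: of_nat_less_iff)
  then have "real n < (real q + 1) * real M" by (simp add: distrib_right)
  then have "real n / real M < real q + 1" using Mpos by (simp only: pos_divide_less_eq)
  moreover have "1 / real M \<le> 1" using assms by simp
  moreover have "real (Suc n) / real M = real n / real M + 1 / real M" by (simp add: add_divide_distrib)
  ultimately have qb: "real (Suc n) / real M - 2 \<le> real q" by linarith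
  have ln: "ln lam < 0" using assms by simp
  have "exp (real q * ln lam) = exp (ln lam) ^ q" by (rule exp_of_nat_mult)
  then have "lam ^ q = exp (real q * ln lam)" using assms by simp
  also have "\<dots> \<le> exp ((real (Suc n) / real M - 2) * ln lam)"
  proof -
    have "real q * ln lam \<le> (real (Suc n) / real M - 2) * ln lam"
      by (rule mult_right_mono_neg[OF qb]) (use ln in linarith)
    then show ?thesis by (simp only: exp_le_cancel_iff)
  qed
  also have "(real (Suc n) / real M - 2) * ln lam = - (- ln lam / real M) * real (Suc n) - 2 * ln lam"
    by (simp add: algebra_simps)
  also have "exp (- (- ln lam / real M) * real (Suc n) - 2 * ln lam) = exp (- (- ln lam / real M) * real (Suc n)) / lam^2"
  proof -
    have "exp (2 * ln lam) = exp (ln lam + ln lam)" by (simp only: mult_2)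
    also have "\<dots> = lam * lam" using assms by (simp only: exp_add exp_ln)
    finally have "exp (2 * ln lam) = lam^2" by (simp only: power2_eq_square)
    then show ?thesis by (simp only: exp_diff)
  qed
  finally show ?thesis unfolding q_def .
qed


lemma abstract_bound:
  fixes kern :: "state \<Rightarrow> state pmf" and k :: int and t \<psi> b p :: real and R :: int and M :: nat
  assumes supp: "\<And>s s'. fst s \<ge> 0 \<Longrightarrow> s' \<in> set_pmf (step kern s) \<Longrightarrow> fst s' \<ge> 0"
    and psi: "0 \<le> \<psi>" "\<psi> < 1" and b: "b > 0"
    and PV: "\<And>s. (\<integral>\<^sup>+ s'. ennreal (exp (t * real_of_int (fst s'))) \<partial>measure_pmf (step kern s))
                 \<le> ennreal \<psi> * ennreal (exp (t * real_of_int (fst s))) + ennreal b"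
    and p: "0 < p" "p \<le> 1" and M: "M \<ge> 1"
    and hitR: "\<And>s. 0 \<le> fst s \<Longrightarrow> fst s < R \<Longrightarrow> wfun kern k M s \<le> ennreal (1 - p)"
    and bigR: "\<And>s::state. fst s \<ge> R \<Longrightarrow> exp (t * real_of_int (fst s)) \<ge> 4 * b / (1 - \<psi>)^2"
  shows "\<exists>C>0. \<exists>\<delta>>0. \<forall>n s. fst s \<ge> 0 \<longrightarrow>
     (\<integral>\<^sup>+ s'. wfun kern k n s' \<partial>measure_pmf (step kern s))
       \<le> ennreal (C * (exp (t * real_of_int (fst s)) + 1) * exp (- \<delta> * real (Suc n)))"
proof -
  let ?Q = "Qop kern k"
  define v where "v = (\<lambda>s::state. exp (t * real_of_int (fst s)))"
  define V where "V = (\<lambda>s. ennreal (v s))"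
  have vpos: "v s > 0" for s by (simp add: v_def)
  have PV': "(\<integral>\<^sup>+ s'. V s' \<partial>measure_pmf (step kern s)) \<le> ennreal \<psi> * V s + ennreal b" for s
    using PV[of s] by (simp add: V_def v_def)
  have QV: "?Q V s \<le> ennreal \<psi> * V s + ennreal b" for s
    using Qop_le_P[of kern k V s] PV'[of s] by (rule order_trans)
  define b' where "b' = b / (1 - \<psi>)"
  have b'pos: "b' > 0" using b psi by (simp add: b'_def)
  have iterV': "(?Q ^^ m) V s \<le> ennreal (\<psi> ^ m) * V s + ennreal b'" for m s
    unfolding b'_def using iterV[OF psi less_imp_le[OF b] QV] .
  define \<epsilon> where "\<epsilon> = min (1/2) ((1 - \<psi>) / 2)"
  have eps: "0 < \<epsilon>" "\<epsilon> \<le> 1/2" "\<epsilon> \<le> (1 - \<psi>) / 2" using psi by (auto simp: \<epsilon>_def)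
  define \<eta> where "\<eta> = \<epsilon> * p"
  have eta: "0 < \<eta>" "\<eta> \<le> p / 2" "\<eta> \<le> (1 - \<psi>) / 2"
  proof -
    show "0 < \<eta>" using eps p by (simp add: \<eta>_def)
    show "\<eta> \<le> p / 2" using eps p unfolding \<eta>_def by (metis mult_right_mono less_imp_le mult.commute times_divide_eq_right mult_1_right)
    have "\<epsilon> * p \<le> \<epsilon> * 1" using eps p by (intro mult_left_mono) auto
    then show "\<eta> \<le> (1 - \<psi>) / 2" using eps unfolding \<eta>_def by argo
  qed
  define lam where "lam = 1 - \<eta>"
  have lam: "0 < lam" "lam < 1" using eta p unfolding lam_def by argo+
  define c where "c = b' / (p - \<eta>)"
  have pe: "p - \<eta> > 0" using eta p by argo
  have cpos: "c > 0" using b'pos pe by (simp add: c_def)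
  have cpe: "c * (p - \<eta>) = b'" using pe by (simp add: c_def)
  have ceta: "c * \<eta> \<le> b'"
  proof -
    have "c * \<eta> \<le> c * (p - \<eta>)" using eta cpos by (intro mult_left_mono) auto
    then show ?thesis using cpe by simp
  qed
  have psiM: "\<psi> ^ M \<le> \<psi>" using psi M by (metis power_one_right power_decreasing less_imp_le)
  have psiM2: "\<psi> ^ M \<le> lam" and psiM3: "lam - \<psi> ^ M \<ge> (1 - \<psi>) / 2"
  proof -
    have a1: "\<psi> \<le> 1 - \<eta>" using eta(3) psi by argo
    have a2: "(1 - \<psi>) / 2 \<le> 1 - \<eta> - \<psi>" using eta(3) psi by argo
    show "\<psi> ^ M \<le> lam" using psiM a1 unfolding lam_def by argo
    show "lam - \<psi> ^ M \<ge> (1 - \<psi>) / 2" using psiM a2 unfolding lam_def by argo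
  qed
  define G where "G = (\<lambda>s. V s + ennreal c * 1)"
  have Gv: "G s = ennreal (v s + c)" for s
    using ennreal_plus[OF less_imp_le[OF vpos[of s]] less_imp_le[OF cpos]] by (simp add: G_def V_def)
  have F1: "(?Q ^^ M) G s \<le> ennreal lam * G s" if s: "fst s \<ge> 0" for s
  proof -
    have "(?Q ^^ M) G s = (?Q ^^ M) V s + ennreal c * (?Q ^^ M) (\<lambda>_. 1) s"
      unfolding G_def by (simp only: iter_add iter_cmult)
    also have "\<dots> \<le> ennreal (\<psi> ^ M) * V s + ennreal b' + ennreal c * wfun kern k M s"
      using iterV'[of M s] by (simp add: wfun_iter add_right_mono)
    finally have A: "(?Q ^^ M) G s \<le> ennreal (\<psi> ^ M) * ennreal (v s) + ennreal b' + ennreal c * wfun kern k M s"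
      by (simp add: V_def)
    have "ennreal (\<psi> ^ M) * ennreal (v s) + ennreal b' + ennreal c * wfun kern k M s \<le> ennreal (lam * (v s + c))"
    proof (cases "fst s < R")
      case True
      have "ennreal (\<psi> ^ M) * ennreal (v s) + ennreal b' + ennreal c * wfun kern k M s
          \<le> ennreal (\<psi> ^ M * v s + b' + c * (1 - p))"
        using hitR[OF s True] psi vpos[of s] b'pos cpos p by (intro ennreal_comb) auto
      also have "\<dots> \<le> ennreal (lam * (v s + c))"
      proof (intro ennreal_leI)
        have "\<psi> ^ M \<le> lam" by (rule psiM2)
        then have "\<psi> ^ M * v s \<le> lam * v s" using vpos[of s] by (intro mult_right_mono) auto
        moreover have "b' + c * (1 - p) = lam * c" using cpe unfolding lam_def by (simp add: algebra_simps)
        ultimately show "\<psi> ^ M * v s + b' + c * (1 - p) \<le> lam * (v s + c)" by (simp add: distrib_left)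
      qed
      finally show ?thesis .
    next
      case False
      have "ennreal (\<psi> ^ M) * ennreal (v s) + ennreal b' + ennreal c * wfun kern k M s
          \<le> ennreal (\<psi> ^ M * v s + b' + c * 1)"
        using wfun_le1[of kern k M s] psi vpos[of s] b'pos cpos p by (intro ennreal_comb) auto
      also have "\<dots> \<le> ennreal (lam * (v s + c))"
      proof (intro ennreal_leI)
        have vb: "v s \<ge> 4 * b / (1 - \<psi>)^2" using bigR[of s] False by (simp add: v_def)
        have "4 * b / (1 - \<psi>)^2 = 4 * b' / (1 - \<psi>)" using psi unfolding b'_def by (simp add: power2_eq_square)
        with vb have vb': "v s \<ge> 4 * b' / (1 - \<psi>)" by simp
        have l1: "lam - \<psi> ^ M \<ge> (1 - \<psi>) / 2" by (rule psiM3)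
        have "(lam - \<psi> ^ M) * v s \<ge> ((1 - \<psi>) / 2) * (4 * b' / (1 - \<psi>))"
          using l1 vb' psi b'pos by (intro mult_mono) auto
        moreover have "((1 - \<psi>) / 2) * (4 * b' / (1 - \<psi>)) = 2 * b'" using psi by (simp add: field_simps)
        ultimately have "(lam - \<psi> ^ M) * v s \<ge> b' + c * \<eta>" using ceta by argo
        then show "\<psi> ^ M * v s + b' + c * 1 \<le> lam * (v s + c)" unfolding lam_def by (simp add: algebra_simps)
      qed
      finally show ?thesis .
    qed
    also have "ennreal (lam * (v s + c)) = ennreal lam * G s"
      using lam vpos[of s] cpos by (simp add: Gv ennreal_mult)
    finally show ?thesis using A by (rule order_trans[rotated])
  qed
  define \<kappa> where "\<kappa> = 1 + b / c"
  have kap: "\<kappa> \<ge> 1" using b cpos by (simp add: \<kappa>_def)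
  have PG: "(\<integral>\<^sup>+ s'. G s' \<partial>measure_pmf (step kern s)) \<le> ennreal \<kappa> * G s" for s
  proof -
    have "(\<integral>\<^sup>+ s'. G s' \<partial>measure_pmf (step kern s)) = (\<integral>\<^sup>+ s'. V s' \<partial>measure_pmf (step kern s)) + ennreal c"
      unfolding G_def by (simp add: nn_integral_add measure_pmf.emeasure_space_1[simplified])
    also have "\<dots> \<le> ennreal \<psi> * ennreal (v s) + ennreal b + ennreal c * 1"
      using PV'[of s] by (simp add: V_def add_right_mono)
    also have "\<dots> \<le> ennreal (\<psi> * v s + b + c * 1)"
      using psi vpos[of s] b cpos by (intro ennreal_comb) auto
    also have "\<dots> \<le> ennreal (\<kappa> * (v s + c))"
    proof (intro ennreal_leI)
      have "\<psi> * v s \<le> 1 * v s" using psi vpos[of s] by (intro mult_right_mono) auto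
      moreover have "\<kappa> * (v s + c) = v s + c + (b / c) * v s + b" using cpos by (simp add: \<kappa>_def field_simps)
      moreover have "(b / c) * v s \<ge> 0" using b cpos vpos[of s] by simp
      ultimately show "\<psi> * v s + b + c * 1 \<le> \<kappa> * (v s + c)" by argo
    qed
    also have "\<dots> = ennreal \<kappa> * G s" using kap vpos[of s] cpos by (simp add: Gv ennreal_mult)
    finally show ?thesis .
  qed
  have QG: "?Q G s \<le> ennreal \<kappa> * G s" for s
    using Qop_le_P[of kern k G s] PG[of s] by (rule order_trans)
  have F3: "(?Q ^^ r) G s \<le> ennreal (\<kappa> ^ r) * G s" for r s
  proof (induction r arbitrary: s)
    case 0 then show ?case by simp
  next
    case (Suc r)
    have "(?Q ^^ Suc r) G s = (?Q ^^ r) (?Q G) s" by (simp add: funpow_Suc_right del: funpow.simps)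
    also have "\<dots> \<le> (?Q ^^ r) (\<lambda>s. ennreal \<kappa> * G s) s" by (intro iter_mono QG)
    also have "\<dots> = ennreal \<kappa> * (?Q ^^ r) G s" by (rule iter_cmult)
    also have "\<dots> \<le> ennreal \<kappa> * (ennreal (\<kappa> ^ r) * G s)" by (intro mult_left_mono Suc.IH) simp
    also have "\<dots> = ennreal (\<kappa> ^ Suc r) * G s" using kap by (simp add: ennreal_mult mult.assoc)
    finally show ?case .
  qed
  have F4: "(?Q ^^ (q * M)) G s \<le> ennreal (lam ^ q) * G s" if "fst s \<ge> 0" for q s
    using that
  proof (induction q arbitrary: s)
    case 0 then show ?case by simp
  next
    case (Suc q)
    have "(?Q ^^ (Suc q * M)) G s = (?Q ^^ (q * M)) ((?Q ^^ M) G) s"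
    proof -
      have "Suc q * M = q * M + M" by simp
      then show ?thesis by (simp only: funpow_add comp_apply)
    qed
    also have "\<dots> \<le> (?Q ^^ (q * M)) (\<lambda>s. ennreal lam * G s) s"
      by (rule iter_mono_D[OF supp]) (auto intro: F1 Suc.prems)
    also have "\<dots> = ennreal lam * (?Q ^^ (q * M)) G s" by (rule iter_cmult)
    also have "\<dots> \<le> ennreal lam * (ennreal (lam ^ q) * G s)" by (intro mult_left_mono Suc.IH Suc.prems) simp
    also have "\<dots> = ennreal (lam ^ Suc q) * G s" using lam by (simp add: ennreal_mult mult.assoc)
    finally show ?case .
  qed
  define A where "A = \<kappa> ^ M / c"
  have Apos: "A > 0" using kap cpos by (simp add: A_def)
  have F5: "wfun kern k n s \<le> ennreal (A * lam ^ (n div M)) * G s" if s: "fst s \<ge> 0" for n s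
  proof -
    define q where "q = n div M"
    define r where "r = n mod M"
    have nqr: "n = q * M + r" by (simp add: q_def r_def)
    have rM: "r < M" using M by (simp add: r_def)
    have one: "1 \<le> ennreal (1 / c) * G s" for s
    proof -
      have h: "1 \<le> (1 / c) * (v s + c)" using cpos vpos[of s] by (simp add: field_simps)
      have "ennreal 1 \<le> ennreal ((1 / c) * (v s + c))" by (rule ennreal_leI[OF h])
      also have "\<dots> = ennreal (1 / c) * G s" unfolding Gv using cpos vpos[of s] by (intro ennreal_mult) auto
      finally show ?thesis by simp
    qed
    have "wfun kern k n s = (?Q ^^ n) (\<lambda>_. 1) s" by (simp add: wfun_iter)
    also have "\<dots> \<le> (?Q ^^ n) (\<lambda>s. ennreal (1 / c) * G s) s" by (intro iter_mono one)
    also have "\<dots> = ennreal (1 / c) * (?Q ^^ n) G s" by (rule iter_cmult)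
    also have "(?Q ^^ n) G s = (?Q ^^ (q * M)) ((?Q ^^ r) G) s" by (simp add: nqr funpow_add)
    also have "\<dots> \<le> (?Q ^^ (q * M)) (\<lambda>s. ennreal (\<kappa> ^ r) * G s) s" by (intro iter_mono F3)
    also have "\<dots> = ennreal (\<kappa> ^ r) * (?Q ^^ (q * M)) G s" by (rule iter_cmult)
    also have "\<dots> \<le> ennreal (\<kappa> ^ r) * (ennreal (lam ^ q) * G s)" by (intro mult_left_mono F4 s) simp
    also have "\<dots> \<le> ennreal (\<kappa> ^ M) * (ennreal (lam ^ q) * G s)"
      using kap rM by (intro mult_right_mono ennreal_leI power_increasing) auto
    finally have "wfun kern k n s \<le> ennreal (1 / c) * (ennreal (\<kappa> ^ M) * (ennreal (lam ^ q) * G s))"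
      by (simp add: mult_left_mono)
    also have "\<dots> = ennreal (A * lam ^ q) * G s"
    proof -
      have n1: "0 \<le> 1 / c" and n2: "0 \<le> \<kappa> ^ M" and n3: "0 \<le> lam ^ q" using cpos kap lam by auto
      have "A * lam ^ q = (1 / c) * \<kappa> ^ M * lam ^ q" by (simp add: A_def)
      then have "ennreal (A * lam ^ q) = ennreal (1 / c) * ennreal (\<kappa> ^ M) * ennreal (lam ^ q)"
        by (simp only: ennreal_mult[OF mult_nonneg_nonneg[OF n1 n2] n3] ennreal_mult[OF n1 n2])
      then show ?thesis by (simp only: mult.assoc)
    qed
    finally show ?thesis unfolding q_def .
  qed
  define \<delta> where "\<delta> = - ln lam / real M"
  have dpos: "\<delta> > 0"
  proof -
    have "ln lam < 0" using lam by simp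
    moreover have "real M > 0" using M by simp
    ultimately have "- ln lam / real M > 0" by (intro divide_pos_pos) auto
    then show ?thesis unfolding \<delta>_def .
  qed
  define C where "C = A * \<kappa> * max 1 c / lam^2"
  have Cpos: "C > 0" using Apos kap lam by (simp add: C_def)
  have "(\<integral>\<^sup>+ s'. wfun kern k n s' \<partial>measure_pmf (step kern s))
       \<le> ennreal (C * (exp (t * real_of_int (fst s)) + 1) * exp (- \<delta> * real (Suc n)))"
    if s: "fst s \<ge> 0" for n s
  proof -
    have "(\<integral>\<^sup>+ s'. wfun kern k n s' \<partial>measure_pmf (step kern s))
        \<le> (\<integral>\<^sup>+ s'. ennreal (A * lam ^ (n div M)) * G s' \<partial>measure_pmf (step kern s))"
      by (intro nn_integral_mono_AE) (auto simp: AE_measure_pmf_iff intro!: F5 supp[OF s])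
    also have "\<dots> = ennreal (A * lam ^ (n div M)) * (\<integral>\<^sup>+ s'. G s' \<partial>measure_pmf (step kern s))"
      by (rule nn_integral_cmult) simp
    also have "\<dots> \<le> ennreal (A * lam ^ (n div M)) * (ennreal \<kappa> * G s)" by (intro mult_left_mono PG) simp
    also have "\<dots> = ennreal (A * lam ^ (n div M) * \<kappa> * (v s + c))"
      using Apos lam kap vpos[of s] cpos by (simp add: Gv ennreal_mult mult.assoc)
    also have "\<dots> \<le> ennreal (C * (exp (t * real_of_int (fst s)) + 1) * exp (- \<delta> * real (Suc n)))"
    proof (intro ennreal_leI)
      have l: "lam ^ (n div M) \<le> exp (- \<delta> * real (Suc n)) / lam^2"
        unfolding \<delta>_def using lam_pow_bound[OF lam M] .
      have vc: "v s + c \<le> max 1 c * (v s + 1)"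
      proof -
        have "v s \<le> max 1 c * v s" using vpos[of s] by (intro mult_le_cancel_right1[THEN iffD2] disjI1) simp
        moreover have "c \<le> max 1 c * 1" by simp
        ultimately show ?thesis by (simp add: distrib_left)
      qed
      have "A * lam ^ (n div M) * \<kappa> * (v s + c) = (A * \<kappa>) * lam ^ (n div M) * (v s + c)" by simp
      also have "\<dots> \<le> (A * \<kappa>) * (exp (- \<delta> * real (Suc n)) / lam^2) * (max 1 c * (v s + 1))"
        using Apos kap l vc vpos[of s] cpos lam
        by (intro mult_mono mult_left_mono) (auto intro: add_nonneg_nonneg)
      also have "\<dots> = C * (v s + 1) * exp (- \<delta> * real (Suc n))" by (simp add: C_def field_simps)
      finally show "A * lam ^ (n div M) * \<kappa> * (v s + c) \<le> C * (exp (t * real_of_int (fst s)) + 1) * exp (- \<delta> * real (Suc n))"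
        by (simp add: v_def)
    qed
    finally show ?thesis .
  qed
  then show ?thesis using Cpos dpos by blast
qed


lemma mom_lemma:
  fixes \<nu> :: "state pmf" and k0 :: nat
  assumes supp: "\<forall>d\<in>set_pmf \<nu>. snd d \<ge> - int k0"
    and I: "(\<integral>\<^sup>+ d. ennreal (exp (\<delta>0 * real_of_int (fst d) + \<gamma> * real_of_int (snd d))) \<partial>measure_pmf \<nu>) \<le> ennreal C0"
    and g: "\<gamma> > 0"
  shows "(\<integral>\<^sup>+ d. ennreal (exp (\<delta>0 * real_of_int (fst d))) \<partial>measure_pmf \<nu>) \<le> ennreal (exp (\<gamma> * real k0) * C0)"
proof -
  have "(\<integral>\<^sup>+ d. ennreal (exp (\<delta>0 * real_of_int (fst d))) \<partial>measure_pmf \<nu>)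
      \<le> (\<integral>\<^sup>+ d. ennreal (exp (\<gamma> * real k0)) * ennreal (exp (\<delta>0 * real_of_int (fst d) + \<gamma> * real_of_int (snd d))) \<partial>measure_pmf \<nu>)"
  proof (intro nn_integral_mono_AE, unfold AE_measure_pmf_iff, intro ballI)
    fix d assume d: "d \<in> set_pmf \<nu>"
    have "- \<gamma> * real_of_int (snd d) \<le> \<gamma> * real k0"
    proof -
      have "- real_of_int (snd d) \<le> real k0" using supp d by force
      then have "\<gamma> * (- real_of_int (snd d)) \<le> \<gamma> * real k0" using g by (intro mult_left_mono) auto
      then show ?thesis by simp
    qed
    then have "exp (\<delta>0 * real_of_int (fst d)) \<le> exp (\<gamma> * real k0) * exp (\<delta>0 * real_of_int (fst d) + \<gamma> * real_of_int (snd d))"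
      by (simp add: exp_add[symmetric])
    then show "ennreal (exp (\<delta>0 * real_of_int (fst d))) \<le> ennreal (exp (\<gamma> * real k0)) * ennreal (exp (\<delta>0 * real_of_int (fst d) + \<gamma> * real_of_int (snd d)))"
      by (simp add: ennreal_mult[symmetric] ennreal_leI)
  qed
  also have "\<dots> = ennreal (exp (\<gamma> * real k0)) * (\<integral>\<^sup>+ d. ennreal (exp (\<delta>0 * real_of_int (fst d) + \<gamma> * real_of_int (snd d))) \<partial>measure_pmf \<nu>)"
    by (rule nn_integral_cmult) simp
  also have "\<dots> \<le> ennreal (exp (\<gamma> * real k0)) * ennreal C0" by (intro mult_left_mono I) simp
  also have "\<dots> \<le> ennreal (exp (\<gamma> * real k0) * C0)"
    by (cases "C0 \<ge> 0") (simp_all add: ennreal_mult ennreal_neg)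
  finally show ?thesis .
qed

lemma tmom_lemma:
  fixes \<nu> :: "state pmf"
  assumes I: "(\<integral>\<^sup>+ d. ennreal (exp (\<delta>0 * real_of_int (fst d))) \<partial>measure_pmf \<nu>) \<le> ennreal B"
    and t: "0 < t" "t \<le> \<delta>0" and B: "0 \<le> B"
  shows "(\<integral>\<^sup>+ d. ennreal (exp (t * real_of_int (fst d))) \<partial>measure_pmf \<nu>) \<le> ennreal (1 + B)"
proof -
  have "(\<integral>\<^sup>+ d. ennreal (exp (t * real_of_int (fst d))) \<partial>measure_pmf \<nu>)
      \<le> (\<integral>\<^sup>+ d. 1 + ennreal (exp (\<delta>0 * real_of_int (fst d))) \<partial>measure_pmf \<nu>)"
  proof (intro nn_integral_mono)
    fix d :: state
    define X where "X = real_of_int (fst d)"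
    have "exp (t * X) \<le> 1 + exp (\<delta>0 * X)"
    proof (cases "X \<ge> 0")
      case True
      have "t * X \<le> \<delta>0 * X" using True t by (intro mult_right_mono) auto
      then have "exp (t * X) \<le> exp (\<delta>0 * X)" by simp
      then show ?thesis by argo
    next
      case False
      then have "t * X \<le> 0" using t by (simp add: mult_nonneg_nonpos)
      then have "exp (t * X) \<le> 1" by simp
      then show ?thesis using exp_gt_zero[of "\<delta>0 * X"] by argo
    qed
    then have "ennreal (exp (t * X)) \<le> ennreal (1 + exp (\<delta>0 * X))" by (rule ennreal_leI)
    also have "\<dots> = ennreal 1 + ennreal (exp (\<delta>0 * X))" by (rule ennreal_plus) auto
    finally show "ennreal (exp (t * real_of_int (fst d))) \<le> 1 + ennreal (exp (\<delta>0 * real_of_int (fst d)))"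
      unfolding X_def ennreal_1 .
  qed
  also have "\<dots> = 1 + (\<integral>\<^sup>+ d. ennreal (exp (\<delta>0 * real_of_int (fst d))) \<partial>measure_pmf \<nu>)"
    by (simp add: nn_integral_add measure_pmf.emeasure_space_1[simplified])
  also have "\<dots> \<le> 1 + ennreal B" by (intro add_left_mono I)
  also have "\<dots> = ennreal (1 + B)" using ennreal_plus[OF zero_le_one B] by (simp only: ennreal_1)
  finally show ?thesis .
qed


lemma K1_supp:
  assumes k0: "k0 \<ge> 1"
    and A1_mu: "\<forall>d\<in>set_pmf mu. fst d \<ge> - int k0 \<and> snd d \<ge> - int k0"
    and A1_mu'': "\<forall>i<k0. \<forall>d\<in>set_pmf (mu'' i). snd d \<ge> - int k0 \<and> fst d \<ge> - int i"
    and s: "fst s \<ge> 0" and s': "s' \<in> set_pmf (step (kernZ1 k0 mu mu'') s)"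
  shows "fst s' \<ge> 0"
proof -
  obtain d where d: "d \<in> set_pmf (kernZ1 k0 mu mu'' s)" and s'd: "s' = (fst s + fst d, snd s + snd d)"
    using s' by (auto simp: step_def)
  show ?thesis
  proof (cases "fst s \<ge> int k0")
    case True
    then have "d \<in> set_pmf mu" using d by (simp add: kernZ1_def)
    then have "fst d \<ge> - int k0" using A1_mu by blast
    then show ?thesis using s'd True by simp
  next
    case False
    then have "d \<in> set_pmf (mu'' (nat (fst s)))" using d by (simp add: kernZ1_def)
    moreover have "nat (fst s) < k0" using False s by linarith
    ultimately have "fst d \<ge> - int (nat (fst s))" using A1_mu'' by blast
    then show ?thesis using s'd s by simp
  qed
qed

lemma K1_PV:
  fixes t \<psi> B0 :: real
  assumes k0: "k0 \<ge> 1" and t: "t > 0" and psi: "0 \<le> \<psi>" and B0: "0 \<le> B0"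
    and mmu: "(\<integral>\<^sup>+ d. ennreal (exp (t * real_of_int (fst d))) \<partial>measure_pmf mu) \<le> ennreal \<psi>"
    and mi: "\<And>i. i < k0 \<Longrightarrow> (\<integral>\<^sup>+ d. ennreal (exp (t * real_of_int (fst d))) \<partial>measure_pmf (mu'' i)) \<le> ennreal B0"
  shows "(\<integral>\<^sup>+ s'. ennreal (exp (t * real_of_int (fst s'))) \<partial>measure_pmf (step (kernZ1 k0 mu mu'') s))
           \<le> ennreal \<psi> * ennreal (exp (t * real_of_int (fst s))) + ennreal (exp (t * real k0) * B0)"
proof -
  let ?K = "kernZ1 k0 mu mu'' s"
  define I where "I = (\<integral>\<^sup>+ d. ennreal (exp (t * real_of_int (fst d))) \<partial>measure_pmf ?K)"
  have "(\<integral>\<^sup>+ s'. ennreal (exp (t * real_of_int (fst s'))) \<partial>measure_pmf (step (kernZ1 k0 mu mu'') s))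
      = (\<integral>\<^sup>+ d. ennreal (exp (t * real_of_int (fst s))) * ennreal (exp (t * real_of_int (fst d))) \<partial>measure_pmf ?K)"
  proof -
    have "\<And>d::state. ennreal (exp (t * real_of_int (fst s + fst d))) = ennreal (exp (t * real_of_int (fst s))) * ennreal (exp (t * real_of_int (fst d)))"
      by (simp add: distrib_left exp_add ennreal_mult)
    then show ?thesis by (simp add: step_def)
  qed
  also have "\<dots> = ennreal (exp (t * real_of_int (fst s))) * I"
    unfolding I_def by (rule nn_integral_cmult) simp
  also have "\<dots> \<le> ennreal \<psi> * ennreal (exp (t * real_of_int (fst s))) + ennreal (exp (t * real k0) * B0)"
  proof (cases "fst s \<ge> int k0")
    case True
    then have "I \<le> ennreal \<psi>" using mmu by (simp add: I_def kernZ1_def)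
    then have "ennreal (exp (t * real_of_int (fst s))) * I \<le> ennreal (exp (t * real_of_int (fst s))) * ennreal \<psi>"
      by (rule mult_left_mono) simp
    then show ?thesis by (simp add: mult.commute add_increasing2)
  next
    case False
    have "nat (fst s) < k0" using False k0 by linarith
    then have "I \<le> ennreal B0" using mi False by (simp add: I_def kernZ1_def)
    moreover have "exp (t * real_of_int (fst s)) \<le> exp (t * real k0)"
      using False t by (simp add: mult_left_mono)
    ultimately have "ennreal (exp (t * real_of_int (fst s))) * I \<le> ennreal (exp (t * real k0)) * ennreal B0"
      by (intro mult_mono) (auto intro: ennreal_leI)
    also have "\<dots> = ennreal (exp (t * real k0) * B0)" using B0 by (simp add: ennreal_mult)
    finally show ?thesis by (simp add: add_increasing)
  qed
  finally show ?thesis .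
qed


theorem lemma5p4:
  fixes k0 :: nat
    and mu :: "state pmf"
    and mu' mu'' :: "nat \<Rightarrow> state pmf"
    and mu2 :: "nat \<Rightarrow> nat \<Rightarrow> state pmf"
  assumes k0: "k0 \<ge> 1"
    and A1_mu: "\<forall>d\<in>set_pmf mu. fst d \<ge> - int k0 \<and> snd d \<ge> - int k0"
    and A1_mu': "\<forall>j<k0. \<forall>d\<in>set_pmf (mu' j). fst d \<ge> - int k0 \<and> snd d \<ge> - int j"
    and A1_mu'': "\<forall>i<k0. \<forall>d\<in>set_pmf (mu'' i). snd d \<ge> - int k0 \<and> fst d \<ge> - int i"
    and A1_mu2: "\<forall>i<k0. \<forall>j<k0. \<forall>d\<in>set_pmf (mu2 i j). fst d \<ge> - int i \<and> snd d \<ge> - int j"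
    and A2: "\<exists>\<delta>>0. \<exists>\<gamma>>0. \<exists>C>0. \<forall>s\<in>NN.
              (\<integral>\<^sup>+ d. ennreal (exp (\<delta> * real_of_int (fst d) + \<gamma> * real_of_int (snd d)))
                   \<partial>measure_pmf (kernZ k0 mu mu' mu'' mu2 s)) \<le> ennreal C"
    and A3_Z0: "irreducible_on UNIV (\<lambda>s. mu)"
    and A3_Z1: "irreducible_on NZ (kernZ1 k0 mu mu'')"
    and A3_Z2: "irreducible_on ZN (kernZ2 k0 mu mu')"
    and A3_Z: "irreducible_on NN (kernZ k0 mu mu' mu'' mu2)"
    and m1_neg: "measure_pmf.expectation mu (\<lambda>d. real_of_int (fst d)) < 0"
  shows "\<forall>\<theta>>0. \<forall>k::nat. \<exists>C>0. \<exists>\<delta>>0. \<forall>(i::nat) (j::int) (n::nat).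
           T1_ge_prob k0 mu mu'' k (int i, j) n \<le> C * exp (\<theta> * real i - \<delta> * real n)"
proof (intro allI impI)
  fix \<theta> :: real and k :: nat
  assume th: "\<theta> > 0"
  let ?K = "kernZ1 k0 mu mu''"
  obtain \<delta>0 \<gamma> C0 where d0: "\<delta>0 > 0" and g: "\<gamma> > 0" and C0: "C0 > 0"
    and A2': "\<And>s. s \<in> NN \<Longrightarrow> (\<integral>\<^sup>+ d. ennreal (exp (\<delta>0 * real_of_int (fst d) + \<gamma> * real_of_int (snd d)))
                   \<partial>measure_pmf (kernZ k0 mu mu' mu'' mu2 s)) \<le> ennreal C0"
    using A2 by blast
  define C1 where "C1 = exp (\<gamma> * real k0) * C0"
  have C1: "C1 > 0" using C0 by (simp add: C1_def)
  have mom_mu: "(\<integral>\<^sup>+ d. ennreal (exp (\<delta>0 * real_of_int (fst d))) \<partial>measure_pmf mu) \<le> ennreal C1"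
  proof -
    have "(int k0, int k0) \<in> NN" by (simp add: NN_def)
    moreover have "kernZ k0 mu mu' mu'' mu2 (int k0, int k0) = mu" by (simp add: kernZ_def)
    ultimately have I: "(\<integral>\<^sup>+ d. ennreal (exp (\<delta>0 * real_of_int (fst d) + \<gamma> * real_of_int (snd d))) \<partial>measure_pmf mu) \<le> ennreal C0"
      using A2' by metis
    show ?thesis unfolding C1_def by (rule mom_lemma[OF _ I g]) (use A1_mu in blast)
  qed
  have mom_i: "(\<integral>\<^sup>+ d. ennreal (exp (\<delta>0 * real_of_int (fst d))) \<partial>measure_pmf (mu'' i)) \<le> ennreal C1"
    if i: "i < k0" for i
  proof -
    have "(int i, int k0) \<in> NN" by (simp add: NN_def)
    moreover have "kernZ k0 mu mu' mu'' mu2 (int i, int k0) = mu'' i" using i by (simp add: kernZ_def)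
    ultimately have I: "(\<integral>\<^sup>+ d. ennreal (exp (\<delta>0 * real_of_int (fst d) + \<gamma> * real_of_int (snd d))) \<partial>measure_pmf (mu'' i)) \<le> ennreal C0"
      using A2' by metis
    show ?thesis unfolding C1_def by (rule mom_lemma[OF _ I g]) (use A1_mu'' i in blast)
  qed
  obtain t \<psi>0 where t: "0 < t" "t \<le> \<theta>" "t \<le> \<delta>0" and psi0: "\<psi>0 < 1"
    and mmu0: "(\<integral>\<^sup>+ d. ennreal (exp (t * real_of_int (fst d))) \<partial>measure_pmf mu) \<le> ennreal \<psi>0"
    using drift_exists[of mu k0 \<delta>0 C1 \<theta>] A1_mu d0 mom_mu m1_neg th by blast
  define \<psi> where "\<psi> = max 0 \<psi>0"
  have psi: "0 \<le> \<psi>" "\<psi> < 1" using psi0 by (auto simp: \<psi>_def)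
  have mmu: "(\<integral>\<^sup>+ d. ennreal (exp (t * real_of_int (fst d))) \<partial>measure_pmf mu) \<le> ennreal \<psi>"
    using mmu0 by (rule order_trans) (simp add: \<psi>_def ennreal_leI)
  define B0 where "B0 = 1 + C1"
  have B0: "0 \<le> B0" using C1 by (simp add: B0_def)
  have mi: "(\<integral>\<^sup>+ d. ennreal (exp (t * real_of_int (fst d))) \<partial>measure_pmf (mu'' i)) \<le> ennreal B0" if "i < k0" for i
    unfolding B0_def using tmom_lemma[OF mom_i[OF that] t(1) t(3)] C1 by simp
  define b where "b = exp (t * real k0) * B0"
  have b: "b > 0" using C1 by (simp add: b_def B0_def)
  have PV: "\<And>s. (\<integral>\<^sup>+ s'. ennreal (exp (t * real_of_int (fst s'))) \<partial>measure_pmf (step ?K s))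
                 \<le> ennreal \<psi> * ennreal (exp (t * real_of_int (fst s))) + ennreal b"
    unfolding b_def by (rule K1_PV[OF k0 t(1) psi(1) B0 mmu mi])
  have supp: "\<And>s s'. fst s \<ge> 0 \<Longrightarrow> s' \<in> set_pmf (step ?K s) \<Longrightarrow> fst s' \<ge> 0"
    using K1_supp[OF k0 A1_mu A1_mu''] by blast
  define Lv where "Lv = max 1 (4 * b / (1 - \<psi>)^2)"
  define R :: int where "R = \<lceil>ln Lv / t\<rceil>"
  have R0: "R \<ge> 0"
  proof -
    have "ln Lv \<ge> 0" by (simp add: Lv_def)
    then have "ln Lv / t \<ge> 0" using t by simp
    then show ?thesis unfolding R_def by simp
  qed
  have bigR: "exp (t * real_of_int (fst s)) \<ge> 4 * b / (1 - \<psi>)^2" if "fst s \<ge> R" for s :: state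
  proof -
    have "ln Lv / t \<le> real_of_int R" unfolding R_def by (rule le_of_int_ceiling)
    also have "\<dots> \<le> real_of_int (fst s)" using that by simp
    finally have "ln Lv \<le> t * real_of_int (fst s)" using t by (simp add: pos_divide_le_eq mult.commute)
    then have "exp (ln Lv) \<le> exp (t * real_of_int (fst s))" by simp
    moreover have "exp (ln Lv) = Lv" by (simp add: Lv_def)
    moreover have "4 * b / (1 - \<psi>)^2 \<le> Lv" by (simp add: Lv_def)
    ultimately show ?thesis by argo
  qed
  have inv: "\<And>x j j'. ?K (x, j) = ?K (x, j')" by (simp add: kernZ1_def)
  have hit_each: "\<forall>x\<in>{..<nat R}. \<exists>pl::real \<times> nat. fst pl > 0 \<and> fst pl \<le> 1 \<and>
      (\<forall>n>snd pl. wfun ?K (int k) n (int x, 0) \<le> ennreal (1 - fst pl))"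
  proof
    fix x assume "x \<in> {..<nat R}"
    have "(int x, 0) \<in> NZ" "(int k, 0) \<in> NZ" by (auto simp: NZ_def)
    then have "((int x, 0), (int k, 0)) \<in> {(u, v). u \<in> NZ \<and> v \<in> NZ \<and> v \<in> set_pmf (step ?K u)}\<^sup>*"
      using A3_Z1 unfolding irreducible_on_def by blast
    from hit_lemma[OF this] obtain p l where "p > 0" "p \<le> 1" "\<forall>n>l. wfun ?K (int k) n (int x, 0) \<le> ennreal (1 - p)"
      by auto
    then show "\<exists>pl::real \<times> nat. fst pl > 0 \<and> fst pl \<le> 1 \<and>
      (\<forall>n>snd pl. wfun ?K (int k) n (int x, 0) \<le> ennreal (1 - fst pl))"
      by (intro exI[of _ "(p, l)"]) auto
  qed
  then obtain f where f: "\<And>x. x \<in> {..<nat R} \<Longrightarrow> fst (f x) > 0 \<and> fst (f x) \<le> 1 \<and>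
      (\<forall>n>snd (f x). wfun ?K (int k) n (int x, 0) \<le> ennreal (1 - fst (f x)))"
    by metis
  define p where "p = Min (insert 1 ((\<lambda>x. fst (f x)) ` {..<nat R}))"
  define M where "M = Suc (Max (insert 0 ((\<lambda>x. snd (f x)) ` {..<nat R})))"
  have p: "0 < p" "p \<le> 1"
  proof -
    have "\<forall>y\<in>insert 1 ((\<lambda>x. fst (f x)) ` {..<nat R}). y > 0" using f by auto
    then show "0 < p" unfolding p_def by (subst Min_gr_iff) auto
    show "p \<le> 1" unfolding p_def by (rule Min_le) auto
  qed
  have M: "M \<ge> 1" by (simp add: M_def)
  have hitR: "wfun ?K (int k) M s \<le> ennreal (1 - p)" if s: "0 \<le> fst s" "fst s < R" for s
  proof -
    define x where "x = nat (fst s)"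
    have x: "x \<in> {..<nat R}" using s by (simp add: x_def)
    have sx: "s = (int x, snd s)" using s by (simp add: x_def)
    have "wfun ?K (int k) M s = wfun ?K (int k) M (int x, 0)"
      using wfun_inv[of ?K "int k" M "int x" "snd s" 0] inv sx by metis
    also have "\<dots> \<le> ennreal (1 - fst (f x))"
    proof -
      have "snd (f x) \<le> Max (insert 0 ((\<lambda>x. snd (f x)) ` {..<nat R}))" using x by (intro Max_ge) auto
      then have "snd (f x) < M" by (simp add: M_def)
      then show ?thesis using f[OF x] by blast
    qed
    also have "\<dots> \<le> ennreal (1 - p)"
    proof (rule ennreal_leI)
      have "p \<le> fst (f x)" unfolding p_def using x by (intro Min_le) auto
      then show "1 - fst (f x) \<le> 1 - p" by simp
    qed
    finally show ?thesis .
  qed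
  have ex: "\<exists>C>0. \<exists>\<delta>>0. \<forall>n s. fst s \<ge> 0 \<longrightarrow>
     (\<integral>\<^sup>+ s'. wfun ?K (int k) n s' \<partial>measure_pmf (step ?K s))
       \<le> ennreal (C * (exp (t * real_of_int (fst s)) + 1) * exp (- \<delta> * real (Suc n)))"
  proof (rule abstract_bound[where kern="?K" and k="int k" and R=R and M=M and p=p and t=t and b=b and \<psi>=\<psi>])
    show "\<And>s s'. 0 \<le> fst s \<Longrightarrow> s' \<in> set_pmf (step ?K s) \<Longrightarrow> 0 \<le> fst s'" by (rule supp)
    show "0 \<le> \<psi>" "\<psi> < 1" by (rule psi(1), rule psi(2))
    show "0 < b" by (rule b)
    show "0 < p" "p \<le> 1" by (rule p(1), rule p(2))
    show "1 \<le> M" by (rule M)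
    show "\<And>s. (\<integral>\<^sup>+ s'. ennreal (exp (t * real_of_int (fst s'))) \<partial>measure_pmf (step ?K s))
                 \<le> ennreal \<psi> * ennreal (exp (t * real_of_int (fst s))) + ennreal b" by (rule PV)
    show "\<And>s. 0 \<le> fst s \<Longrightarrow> fst s < R \<Longrightarrow> wfun ?K (int k) M s \<le> ennreal (1 - p)" by (rule hitR)
    show "\<And>s::state. R \<le> fst s \<Longrightarrow> 4 * b / (1 - \<psi>)^2 \<le> exp (t * real_of_int (fst s))" by (rule bigR)
  qed
  then obtain C \<delta> where C: "C > 0" and dl: "\<delta> > 0" and main: "\<And>n s. fst s \<ge> 0 \<Longrightarrow>
     (\<integral>\<^sup>+ s'. wfun ?K (int k) n s' \<partial>measure_pmf (step ?K s))
       \<le> ennreal (C * (exp (t * real_of_int (fst s)) + 1) * exp (- \<delta> * real (Suc n)))"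
    by blast
  define C' where "C' = max 1 (2 * C)"
  have C': "C' > 0" by (simp add: C'_def)
  have "T1_ge_prob k0 mu mu'' k (int i, j) n \<le> C' * exp (\<theta> * real i - \<delta> * real n)" for i j n
  proof (cases n)
    case 0
    have "T1_ge_prob k0 mu mu'' k (int i, j) n \<le> 1" unfolding T1_ge_prob_def by simp
    also have "1 \<le> C' * exp (\<theta> * real i - \<delta> * real n)"
    proof -
      have "1 \<le> exp (\<theta> * real i)" using th by simp
      moreover have "1 \<le> C'" by (simp add: C'_def)
      ultimately have "1 * 1 \<le> C' * exp (\<theta> * real i)" by (intro mult_mono) auto
      then show ?thesis using 0 by simp
    qed
    finally show ?thesis .
  next
    case (Suc n')
    let ?E = "{xs. \<forall>m. 0 < m \<and> m < Suc n' \<longrightarrow> fst (xs ! m) \<noteq> int k}"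
    have "emeasure (measure_pmf (traj ?K (int i, j) (Suc n'))) ?E
        = (\<integral>\<^sup>+ s'. wfun ?K (int k) n' s' \<partial>measure_pmf (step ?K (int i, j)))"
      by (rule T1_eq)
    also have "\<dots> \<le> ennreal (C * (exp (t * real i) + 1) * exp (- \<delta> * real (Suc n')))"
      using main[of "(int i, j)" n'] by simp
    also have "\<dots> \<le> ennreal (C' * exp (\<theta> * real i - \<delta> * real n))"
    proof (rule ennreal_leI)
      have "exp (t * real i) \<le> exp (\<theta> * real i)" using t by (simp add: mult_right_mono)
      moreover have "1 \<le> exp (\<theta> * real i)" using th by simp
      ultimately have e: "exp (t * real i) + 1 \<le> 2 * exp (\<theta> * real i)" by argo
      have "C * (exp (t * real i) + 1) \<le> C' * exp (\<theta> * real i)"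
      proof -
        have "C * (exp (t * real i) + 1) \<le> C * (2 * exp (\<theta> * real i))" using e C by (intro mult_left_mono) auto
        also have "\<dots> = (2 * C) * exp (\<theta> * real i)" by simp
        also have "\<dots> \<le> C' * exp (\<theta> * real i)" by (intro mult_right_mono) (auto simp: C'_def)
        finally show ?thesis .
      qed
      then have "C * (exp (t * real i) + 1) * exp (- \<delta> * real (Suc n')) \<le> C' * exp (\<theta> * real i) * exp (- \<delta> * real (Suc n'))"
        by (intro mult_right_mono) auto
      also have "\<dots> = C' * exp (\<theta> * real i - \<delta> * real n)"
      proof -
        have "\<theta> * real i - \<delta> * real n = \<theta> * real i + (- \<delta> * real (Suc n'))" using Suc by simp
        then have h: "exp (\<theta> * real i - \<delta> * real n) = exp (\<theta> * real i) * exp (- \<delta> * real (Suc n'))"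
          by (simp only: exp_add)
        show ?thesis by (simp only: h mult.assoc)
      qed
      finally show "C * (exp (t * real i) + 1) * exp (- \<delta> * real (Suc n')) \<le> C' * exp (\<theta> * real i - \<delta> * real n)" .
    qed
    finally have "emeasure (measure_pmf (traj ?K (int i, j) (Suc n'))) ?E \<le> ennreal (C' * exp (\<theta> * real i - \<delta> * real n))" .
    then have "measure (measure_pmf (traj ?K (int i, j) (Suc n'))) ?E \<le> C' * exp (\<theta> * real i - \<delta> * real n)"
      using C' by (simp add: measure_pmf.emeasure_eq_measure ennreal_le_iff)
    then show ?thesis using Suc by (simp add: T1_ge_prob_def)
  qed
  then show "\<exists>C>0. \<exists>\<delta>>0. \<forall>(i::nat) (j::int) (n::nat).
           T1_ge_prob k0 mu mu'' k (int i, j) n \<le> C * exp (\<theta> * real i - \<delta> * real n)"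
    using C' dl by blast
qed


end
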